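(* Let $a_1,\dots,a_n\in\mathbb{C}$ and suppose $f(z)=\theta(z-a_1)\cdots\theta(z-a_n)$ does not change sign on $\mathbb{R}$ (i.e. $f(x)\ge0$ for all $x\in\mathbb{R}$ or $f(x)\le 0$ for all $x\in\mathbb{R}$). Then there exist $\lambda\in\mathbb{R}\setminus\{0\}$ and $b_1,\dots,b_n\in\mathbb{C}$ with $|\operatorname{Im}b_j|<\operatorname{Im}\tau$ for all $j$, such that the indices $1,\dots,n$ can be partitioned into singletons $\{j\}$ with $b_j\in\mathbb{R}$ and pairs $\{j,k\}$ with $b_j=\overline{b_k}$, and $f(z)=\lambda\,\theta(z-b_1)\cdots\theta(z-b_n)$.
   Context: Let $0<q<1$ and $\tau\in i\mathbb{R}_{>0}$ with $q=e^{\pi i\tau}$. The Jacobi theta function is $\theta(x)=\sum_{m\in\mathbb{Z}}q^{m^2}e^{2\pi i m x}$. *)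

theory Defs
  imports "HOL-Analysis.Analysis" "HOL-Library.Disjoint_Sets"
begin

definition nome :: "complex \<Rightarrow> complex" where
  "nome tau = exp (of_real pi * \<i> * tau)"

definition jtheta :: "complex \<Rightarrow> complex \<Rightarrow> complex" where
  "jtheta tau x = (\<Sum>\<^sub>\<infinity>m::int. nome tau ^ nat (m^2) * exp (2 * of_real pi * \<i> * of_int m * x))"

end

theory Submission
  imports Defs "HOL-Complex_Analysis.Complex_Analysis"
begin


definition tm :: "complex \<Rightarrow> int \<Rightarrow> complex \<Rightarrow> complex" where
  "tm tau m z = exp (of_int (m^2) * (of_real pi * \<i> * tau) + 2 * of_real pi * \<i> * of_int m * z)"

lemma jtheta_tm: "jtheta tau z = (\<Sum>\<^sub>\<infinity>m. tm tau m z)"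
proof -
  have "nome tau ^ nat (m^2) * exp (2 * of_real pi * \<i> * of_int m * z) = tm tau m z" for m
  proof -
    have "nome tau ^ nat (m^2) = exp (of_nat (nat (m^2)) * (of_real pi * \<i> * tau))"
      unfolding nome_def by (rule exp_of_nat_mult[symmetric])
    also have "(of_nat (nat (m^2)) :: complex) = of_int (m^2)"
      by (metis of_int_of_nat_eq zero_le_power2 nat_0_le)
    finally show ?thesis by (simp add: tm_def exp_add)
  qed
  then show ?thesis unfolding jtheta_def by simp
qed

lemma norm_tm: "norm (tm tau m z) = exp (- pi * Im tau * of_int m ^ 2 - 2 * pi * of_int m * Im z)"
  by (simp add: tm_def norm_exp_eq_Re)

definition Mb :: "real \<Rightarrow> real \<Rightarrow> int \<Rightarrow> real" where
  "Mb t R m = exp (- pi * t * of_int m ^ 2 + 2 * pi * R * \<bar>of_int m\<bar>)"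

lemma summable_gk:
  assumes t: "t > 0"
  shows "summable (\<lambda>k::nat. exp (- pi * t * of_nat k ^ 2 + 2 * pi * R * of_nat k))"
proof -
  define g where "g = (\<lambda>k::nat. exp (- pi * t * of_nat k ^ 2 + 2 * pi * R * of_nat k))"
  obtain N :: nat where N: "(2 * pi * \<bar>R\<bar> + ln 2) / (2 * pi * t) \<le> of_nat N"
    using real_arch_simple by blast
  have "norm (g (Suc k)) \<le> (1/2) * norm (g k)" if "k \<ge> N" for k
  proof -
    have "g (Suc k) = g k * exp (- pi * t * (2 * of_nat k + 1) + 2 * pi * R)"
      unfolding g_def by (simp add: exp_add[symmetric] algebra_simps power2_eq_square)
    moreover have "exp (- pi * t * (2 * of_nat k + 1) + 2 * pi * R) \<le> 1/2"
    proof -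
      have "(2 * pi * \<bar>R\<bar> + ln 2) / (2 * pi * t) \<le> of_nat k"
        using N that by (meson of_nat_le_iff order_trans)
      hence "2 * pi * \<bar>R\<bar> + ln 2 \<le> of_nat k * (2 * pi * t)"
        using t by (simp add: divide_le_eq)
      moreover have "0 \<le> pi * t" using t by simp
      moreover have "pi * R \<le> pi * \<bar>R\<bar>" by (rule mult_left_mono) auto
      moreover have "- pi * t * (2 * of_nat k + 1) + 2 * pi * R = - (of_nat k * (2 * pi * t)) - pi * t + 2 * (pi * R)"
        by (simp add: algebra_simps)
      ultimately have "- pi * t * (2 * of_nat k + 1) + 2 * pi * R \<le> - ln 2"
        by linarith
      hence "exp (- pi * t * (2 * of_nat k + 1) + 2 * pi * R) \<le> exp (- ln 2)" by simp
      also have "exp (- ln 2) = (1/2::real)" by (simp add: exp_minus)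
      finally show ?thesis .
    qed
    ultimately show ?thesis unfolding g_def by (simp add: mult_left_le)
  qed
  then have "summable g" by (intro summable_ratio_test[of "1/2" N]) auto
  then show ?thesis unfolding g_def .
qed

lemma Mb_summable:
  assumes t: "t > 0"
  shows "Mb t R summable_on UNIV"
proof -
  define g where "g = (\<lambda>k::nat. exp (- pi * t * of_nat k ^ 2 + 2 * pi * R * of_nat k))"
  have sg: "summable g" unfolding g_def using summable_gk[OF t] .
  have "(Mb t R \<circ> int) = g" by (auto simp: Mb_def g_def fun_eq_iff)
  with sg have 1: "Mb t R summable_on (range int)"
    by (subst summable_on_reindex) (auto simp: summable_on_UNIV_nonneg_real_iff g_def)
  have "(Mb t R \<circ> (\<lambda>k. - int k - 1)) = (\<lambda>k. g (Suc k))"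
    by (auto simp: Mb_def g_def fun_eq_iff power2_eq_square algebra_simps)
  moreover have "summable (\<lambda>k. g (Suc k))" using sg summable_Suc_iff by blast
  ultimately have 2: "Mb t R summable_on (range (\<lambda>k. - int k - 1))"
    by (subst summable_on_reindex) (auto simp: inj_on_def summable_on_UNIV_nonneg_real_iff g_def)
  have U: "UNIV = range int \<union> range (\<lambda>k. - int k - 1)"
  proof -
    have "m \<in> range int \<union> range (\<lambda>k. - int k - 1)" for m :: int
    proof (cases "m \<ge> 0")
      case True then show ?thesis by (metis UnI1 nonneg_int_cases rangeI)
    next
      case False then have "m = - int (nat (- m - 1)) - 1" by simp
      then show ?thesis by (metis UnI2 rangeI)
    qed
    then show ?thesis by blast
  qed
  have "range int \<inter> range (\<lambda>k. - int k - 1) = {}" by auto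
  then show ?thesis using summable_on_Un_disjoint[OF 1 2] U by simp
qed

lemma norm_tm_le:
  assumes "\<bar>Im z\<bar> \<le> R"
  shows "norm (tm tau m z) \<le> Mb (Im tau) R m"
proof -
  have "- (of_int m * Im z) \<le> \<bar>of_int m * Im z\<bar>" by simp
  also have "\<dots> = \<bar>of_int m\<bar> * \<bar>Im z\<bar>" by (simp add: abs_mult)
  also have "\<dots> \<le> \<bar>of_int m\<bar> * R" using assms by (simp add: mult_left_mono)
  finally have h: "- (of_int m * Im z) \<le> \<bar>of_int m\<bar> * R" .
  have "pi * (- (of_int m * Im z)) \<le> pi * (\<bar>of_int m\<bar> * R)" by (rule mult_left_mono[OF h]) simp
  then have "- pi * Im tau * of_int m ^ 2 - 2 * pi * of_int m * Im z \<le> - pi * Im tau * of_int m ^ 2 + 2 * pi * R * \<bar>of_int m\<bar>"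
    by (simp add: algebra_simps)
  then show ?thesis unfolding norm_tm Mb_def by simp
qed

lemma tm_abs_summable:
  assumes "Im tau > 0"
  shows "(\<lambda>m. norm (tm tau m z)) summable_on UNIV"
  by (rule summable_on_comparison_test[OF Mb_summable[OF assms, of "\<bar>Im z\<bar>"]])
     (use norm_tm_le[of z "\<bar>Im z\<bar>"] in auto)

lemma tm_summable:
  assumes "Im tau > 0"
  shows "(\<lambda>m. tm tau m z) summable_on UNIV"
  using abs_summable_summable tm_abs_summable[OF assms] by (metis (no_types))

lemma jtheta_holo:
  assumes "Im tau > 0"
  shows "jtheta tau holomorphic_on UNIV"
proof -
  have "jtheta tau field_differentiable (at z)" for z
  proof -
    define R where "R = \<bar>Im z\<bar> + 1"
    have bd: "\<bar>Im y\<bar> \<le> R" if "y \<in> cball z 1" for y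
    proof -
      have "\<bar>Im y - Im z\<bar> \<le> 1" using that abs_Im_le_cmod[of "y - z"] by (simp add: dist_norm norm_minus_commute)
      then show ?thesis unfolding R_def by linarith
    qed
    have ul: "uniform_limit (cball z 1) (\<lambda>X y. \<Sum>x\<in>X. tm tau x y) (\<lambda>y. \<Sum>\<^sub>\<infinity>x\<in>UNIV. tm tau x y) (finite_subsets_at_top UNIV)"
      by (rule Weierstrass_m_test_general[OF _ Mb_summable[OF assms, of R]]) (use norm_tm_le bd in auto)
    have ev: "eventually (\<lambda>X. continuous_on (cball z 1) (\<lambda>y. \<Sum>x\<in>X. tm tau x y) \<and> (\<lambda>y. \<Sum>x\<in>X. tm tau x y) holomorphic_on ball z 1) (finite_subsets_at_top UNIV)"
      by (intro always_eventually allI conjI) (auto simp: tm_def intro!: continuous_intros holomorphic_intros)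
    obtain "(\<lambda>y. \<Sum>\<^sub>\<infinity>x\<in>UNIV. tm tau x y) holomorphic_on ball z 1"
      by (rule holomorphic_uniform_limit[OF ev ul]) (simp add: finite_subsets_at_top_neq_bot)
    then have "jtheta tau holomorphic_on ball z 1" by (simp add: jtheta_tm[abs_def])
    then show ?thesis by (meson centre_in_ball holomorphic_on_imp_differentiable_at open_ball zero_less_one)
  qed
  then show ?thesis by (simp add: holomorphic_on_def field_differentiable_at_within)
qed

lemma exp_2pi_int: "exp (2 * of_real pi * \<i> * of_int m) = 1"
proof -
  have "exp (of_real (2 * of_int m * pi) * \<i>) = 1" using exp_integer_2pi[of "of_int m :: real"] by simp
  then show ?thesis by (simp add: mult_ac)
qed

lemma tm_plus1: "tm tau m (z + 1) = tm tau m z"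
proof -
  have e: "of_int (m^2) * (of_real pi * \<i> * tau) + 2 * of_real pi * \<i> * of_int m * (z + 1)
     = (of_int (m^2) * (of_real pi * \<i> * tau) + 2 * of_real pi * \<i> * of_int m * z) + 2 * of_real pi * \<i> * of_int m"
    by (simp add: algebra_simps)
  show ?thesis by (simp only: tm_def e exp_add exp_2pi_int mult_1_right)
qed

lemma jtheta_plus1: "jtheta tau (z + 1) = jtheta tau z"
  by (simp add: jtheta_tm tm_plus1)

lemma tm_plus_tau: "tm tau m (z + tau) = exp (- of_real pi * \<i> * tau - 2 * of_real pi * \<i> * z) * tm tau (m + 1) z"
  unfolding tm_def by (simp add: exp_add[symmetric] algebra_simps power2_eq_square)

lemma jtheta_plus_tau: "jtheta tau (z + tau) = exp (- of_real pi * \<i> * tau - 2 * of_real pi * \<i> * z) * jtheta tau z"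
proof -
  have "jtheta tau (z + tau) = (\<Sum>\<^sub>\<infinity>m. exp (- of_real pi * \<i> * tau - 2 * of_real pi * \<i> * z) * tm tau (m + 1) z)"
    by (simp add: jtheta_tm tm_plus_tau)
  also have "\<dots> = exp (- of_real pi * \<i> * tau - 2 * of_real pi * \<i> * z) * (\<Sum>\<^sub>\<infinity>m. tm tau (m + 1) z)"
    by (rule infsum_cmult_right')
  also have "(\<Sum>\<^sub>\<infinity>m. tm tau (m + 1) z) = (\<Sum>\<^sub>\<infinity>m. tm tau m z)"
    by (rule infsum_reindex_bij_betw[of "\<lambda>m. m + 1"]) (auto simp: bij_betw_def inj_on_def image_iff intro!: exI[of _ "_ - 1"])
  finally show ?thesis by (simp add: jtheta_tm)
qed

lemma tm_cnj:
  assumes "Re tau = 0"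
  shows "cnj (tm tau m z) = tm tau (- m) (cnj z)"
proof -
  have "cnj tau = - tau" using assms by (simp add: complex_eq_iff)
  then show ?thesis unfolding tm_def exp_cnj by (simp add: algebra_simps)
qed

lemma jtheta_cnj:
  assumes "Re tau = 0"
  shows "cnj (jtheta tau z) = jtheta tau (cnj z)"
proof -
  have "cnj (jtheta tau z) = (\<Sum>\<^sub>\<infinity>m. tm tau (- m) (cnj z))"
    by (simp add: jtheta_tm tm_cnj[OF assms] flip: infsum_cnj)
  also have "\<dots> = (\<Sum>\<^sub>\<infinity>m. tm tau m (cnj z))"
    by (rule infsum_reindex_bij_betw[of uminus]) (auto simp: bij_betw_def inj_on_def image_iff intro!: exI[of _ "- _"])
  finally show ?thesis by (simp add: jtheta_tm)
qed

definition w0 :: "complex \<Rightarrow> complex" where "w0 tau = 1/2 + tau/2"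

lemma tm_w0: "tm tau (- 1 - m) (w0 tau) = - tm tau m (w0 tau)"
proof -
  have "tm tau (- 1 - m) (w0 tau) = tm tau m (w0 tau) * (exp (- (2 * of_real pi * \<i> * of_int m)) * exp (- (of_real pi * \<i>)))"
    unfolding tm_def w0_def by (simp add: exp_add[symmetric] algebra_simps power2_eq_square)
  also have "exp (- (2 * of_real pi * \<i> * of_int m)) = 1" by (simp add: exp_minus exp_2pi_int)
  also have "exp (- (of_real pi * \<i>)) = -1" by (simp add: exp_minus)
  finally show ?thesis by simp
qed

lemma jtheta_w0: "jtheta tau (w0 tau) = 0"
proof -
  have "(\<Sum>\<^sub>\<infinity>m. tm tau m (w0 tau)) = (\<Sum>\<^sub>\<infinity>m. tm tau (- 1 - m) (w0 tau))"
    by (rule infsum_reindex_bij_betw[of "\<lambda>m. - 1 - m", symmetric]) (auto simp: bij_betw_def inj_on_def image_iff intro!: exI[of _ "- 1 - _"])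
  also have "\<dots> = - (\<Sum>\<^sub>\<infinity>m. tm tau m (w0 tau))"
    by (simp add: tm_w0 infsum_uminus)
  finally show ?thesis by (simp add: jtheta_tm)
qed

lemma jtheta_0_ne:
  assumes "Re tau = 0" "Im tau > 0"
  shows "jtheta tau 0 \<noteq> 0"
proof -
  have re: "Re (tm tau m 0) = exp (- pi * Im tau * of_int m ^ 2)" for m
  proof -
    have t: "tau = \<i> * of_real (Im tau)" using assms(1) by (simp add: complex_eq_iff)
    have "tm tau m 0 = exp (of_real (- pi * Im tau * of_int m ^ 2))"
      unfolding tm_def by (subst t) (simp add: algebra_simps)
    then show ?thesis by (simp only: exp_of_real Re_complex_of_real)
  qed
  have s: "(\<lambda>m. Re (tm tau m 0)) summable_on UNIV"
    using summable_on_Re[OF tm_summable[OF assms(2)]] by simp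
  have "infsum (\<lambda>m. Re (tm tau m 0)) {0} \<le> infsum (\<lambda>m. Re (tm tau m 0)) UNIV"
    by (rule infsum_mono_neutral) (use s in \<open>auto simp: re\<close>)
  then have "1 \<le> infsum (\<lambda>m. Re (tm tau m 0)) UNIV" by (simp add: re)
  then have "1 \<le> Re (jtheta tau 0)"
    by (simp add: jtheta_tm infsum_Re[OF tm_summable[OF assms(2)]])
  then show ?thesis by auto
qed

lemma jtheta_plus_nat: "jtheta tau (z + of_nat k) = jtheta tau z"
proof (induction k arbitrary: z)
  case (Suc k)
  have "jtheta tau (z + of_nat (Suc k)) = jtheta tau ((z + of_nat k) + 1)" by (simp add: add_ac)
  also have "\<dots> = jtheta tau z" by (simp add: jtheta_plus1 Suc)
  finally show ?case .
qed simp

lemma jtheta_plus_int: "jtheta tau (z + of_int m) = jtheta tau z"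
proof (cases "m \<ge> 0")
  case True
  then obtain k where "m = int k" by (metis nonneg_int_cases)
  then show ?thesis by (simp add: jtheta_plus_nat[of tau z k, simplified])
next
  case False
  then obtain k where k: "m = - int k" by (metis nonpos_int_cases not_le less_imp_le)
  have "jtheta tau (z + of_int m) = jtheta tau ((z + of_int m) + of_nat k)" by (simp add: jtheta_plus_nat)
  also have "(z + of_int m) + of_nat k = z" by (simp add: k)
  finally show ?thesis .
qed

definition latf :: "complex \<Rightarrow> int \<Rightarrow> complex \<Rightarrow> complex" where
  "latf tau n z = exp (- of_real pi * \<i> * tau * of_int n ^ 2 - 2 * of_real pi * \<i> * of_int n * z)"

lemma latf_ne: "latf tau n z \<noteq> 0" by (simp add: latf_def)

lemma jtheta_plus_nat_tau: "jtheta tau (z + of_nat k * tau) = latf tau (int k) z * jtheta tau z"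
proof (induction k)
  case 0 then show ?case by (simp add: latf_def)
next
  case (Suc k)
  have "jtheta tau (z + of_nat (Suc k) * tau) = jtheta tau ((z + of_nat k * tau) + tau)" by (simp add: algebra_simps)
  also have "\<dots> = exp (- of_real pi * \<i> * tau - 2 * of_real pi * \<i> * (z + of_nat k * tau)) * (latf tau (int k) z * jtheta tau z)"
    by (simp add: jtheta_plus_tau Suc)
  also have "\<dots> = latf tau (int (Suc k)) z * jtheta tau z"
    unfolding latf_def by (simp add: exp_add[symmetric] algebra_simps power2_eq_square)
  finally show ?case .
qed

lemma jtheta_plus_int_tau: "jtheta tau (z + of_int n * tau) = latf tau n z * jtheta tau z"
proof (cases "n \<ge> 0")
  case True
  then obtain k where "n = int k" by (metis nonneg_int_cases)
  then show ?thesis using jtheta_plus_nat_tau[of tau z k] by simp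
next
  case False
  then obtain k where k: "n = - int k" by (metis nonpos_int_cases not_le less_imp_le)
  have "jtheta tau z = jtheta tau ((z + of_int n * tau) + of_nat k * tau)" by (simp add: k)
  also have "\<dots> = latf tau (int k) (z + of_int n * tau) * jtheta tau (z + of_int n * tau)"
    by (rule jtheta_plus_nat_tau)
  finally have e: "jtheta tau z = latf tau (int k) (z + of_int n * tau) * jtheta tau (z + of_int n * tau)" .
  have "latf tau n z * latf tau (int k) (z + of_int n * tau) = 1"
    unfolding latf_def k by (simp add: exp_add[symmetric] algebra_simps power2_eq_square)
  then show ?thesis using e by (metis mult.assoc mult_1)
qed

lemma jtheta_lattice: "jtheta tau (z + of_int m + of_int n * tau) = latf tau n z * jtheta tau z"
  by (metis add.commute add.left_commute jtheta_plus_int jtheta_plus_int_tau)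

lemma jtheta_lattice_zero: "jtheta tau (z + of_int m + of_int n * tau) = 0 \<longleftrightarrow> jtheta tau z = 0"
  by (simp add: jtheta_lattice latf_ne)

lemma deriv_jtheta_plus1:
  assumes "Im tau > 0"
  shows "deriv (jtheta tau) (z + 1) = deriv (jtheta tau) z"
proof -
  have "(jtheta tau has_field_derivative deriv (jtheta tau) (z + 1)) (at (z + 1))"
    by (rule holomorphic_derivI[OF jtheta_holo[OF assms]]) auto
  then have "((\<lambda>x. jtheta tau (x + 1)) has_field_derivative deriv (jtheta tau) (z + 1)) (at z)"
    by (simp add: DERIV_shift)
  then have "(jtheta tau has_field_derivative deriv (jtheta tau) (z + 1)) (at z)"
    by (simp add: jtheta_plus1)
  then show ?thesis by (simp add: DERIV_imp_deriv)
qed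

lemma deriv_jtheta_plus_tau:
  assumes "Im tau > 0"
  shows "deriv (jtheta tau) (z + tau) = exp (- of_real pi * \<i> * tau - 2 * of_real pi * \<i> * z) * (deriv (jtheta tau) z - 2 * of_real pi * \<i> * jtheta tau z)"
proof -
  have d: "(jtheta tau has_field_derivative deriv (jtheta tau) w) (at w)" for w
    by (rule holomorphic_derivI[OF jtheta_holo[OF assms]]) auto
  from d[of "z + tau"] have "((\<lambda>x. jtheta tau (x + tau)) has_field_derivative deriv (jtheta tau) (z + tau)) (at z)"
    by (simp add: DERIV_shift)
  then have 1: "((\<lambda>x. exp (- of_real pi * \<i> * tau - 2 * of_real pi * \<i> * x) * jtheta tau x) has_field_derivative deriv (jtheta tau) (z + tau)) (at z)"
    by (simp add: jtheta_plus_tau)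
  have 2: "((\<lambda>x. exp (- of_real pi * \<i> * tau - 2 * of_real pi * \<i> * x) * jtheta tau x) has_field_derivative
      (exp (- of_real pi * \<i> * tau - 2 * of_real pi * \<i> * z) * (- 2 * of_real pi * \<i>)) * jtheta tau z + exp (- of_real pi * \<i> * tau - 2 * of_real pi * \<i> * z) * deriv (jtheta tau) z) (at z)"
    by (rule derivative_eq_intros d refl | simp)+
  have "deriv (jtheta tau) (z + tau) = (exp (- of_real pi * \<i> * tau - 2 * of_real pi * \<i> * z) * (- 2 * of_real pi * \<i>)) * jtheta tau z + exp (- of_real pi * \<i> * tau - 2 * of_real pi * \<i> * z) * deriv (jtheta tau) z"
    using DERIV_unique[OF 1 2] .
  then show ?thesis by (simp add: algebra_simps)
qed

lemma lp_shift_integral: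
  assumes "(f has_contour_integral I) (linepath a b)"
    and "\<And>x. x \<in> closed_segment a b \<Longrightarrow> g (x + c) = f x + k"
  shows "(g has_contour_integral (I + k * (b - a))) (linepath (a + c) (b + c))"
proof -
  have h: "((\<lambda>x. f (linepath a b x) * (b - a)) has_integral I) {0..1}"
    using assms(1) by (simp add: has_contour_integral_linepath)
  have hk: "((\<lambda>x. k * (b - a)) has_integral (k * (b - a))) {0..1::real}"
    using has_integral_const_real[of "k * (b - a)" 0 1] by simp
  have s: "((\<lambda>x. f (linepath a b x) * (b - a) + k * (b - a)) has_integral (I + k * (b - a))) {0..1}"
    by (rule has_integral_add[OF h hk])
  have "((\<lambda>x. g (linepath (a + c) (b + c) x) * ((b + c) - (a + c))) has_integral (I + k * (b - a))) {0..1}"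
  proof (rule has_integral_eq[OF _ s])
    fix x :: real assume x: "x \<in> {0..1}"
    have "linepath (a + c) (b + c) x = linepath a b x + c"
      by (simp add: linepath_def algebra_simps scaleR_conv_of_real)
    then have "g (linepath (a + c) (b + c) x) = f (linepath a b x) + k"
      using assms(2)[OF linepath_in_path[OF x]] by simp
    then show "f (linepath a b x) * (b - a) + k * (b - a) = g (linepath (a + c) (b + c) x) * ((b + c) - (a + c))"
      by (simp add: algebra_simps)
  qed
  then show ?thesis by (simp add: has_contour_integral_linepath)
qed

lemma rect_integral:
  assumes tre: "Re tau = 0" and tim: "Im tau > 0"
    and nz: "\<forall>w\<in>path_image (rectpath s (s + 1 + tau)). jtheta tau w \<noteq> 0"
  shows "((\<lambda>z. deriv (jtheta tau) z / jtheta tau z) has_contour_integral (2 * of_real pi * \<i>)) (rectpath s (s + 1 + tau))"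
proof -
  define th where "th = jtheta tau"
  define L where "L = (\<lambda>z. deriv th z / th z)"
  have e2: "Complex (Re (s + 1 + tau)) (Im s) = s + 1" using tre by (simp add: complex_eq_iff)
  have e4: "Complex (Re s) (Im (s + 1 + tau)) = s + tau" using tre by (simp add: complex_eq_iff)
  have R: "rectpath s (s + 1 + tau) = linepath s (s + 1) +++ linepath (s + 1) (s + 1 + tau) +++ linepath (s + 1 + tau) (s + tau) +++ linepath (s + tau) s"
    unfolding rectpath_def Let_def e2 e4 ..
  have PI: "path_image (rectpath s (s + 1 + tau)) = closed_segment s (s + 1) \<union> closed_segment (s + 1) (s + 1 + tau) \<union> closed_segment (s + 1 + tau) (s + tau) \<union> closed_segment (s + tau) s"
    unfolding R by (simp add: path_image_join Un_assoc)
  have nz1: "th w \<noteq> 0" if "w \<in> closed_segment s (s + 1)" for w using nz that PI th_def by auto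
  have nz2: "th w \<noteq> 0" if "w \<in> closed_segment s (s + tau)" for w
  proof -
    have "w \<in> closed_segment (s + tau) s" using that by (simp add: closed_segment_commute)
    then show ?thesis using nz PI th_def by auto
  qed
  have holo: "th holomorphic_on UNIV" unfolding th_def by (rule jtheta_holo[OF tim])
  have dholo: "deriv th holomorphic_on UNIV" by (rule holomorphic_deriv[OF holo]) auto
  have cont: "continuous_on A L" if "\<And>w. w \<in> A \<Longrightarrow> th w \<noteq> 0" for A
    unfolding L_def
    by (intro continuous_on_divide holomorphic_on_imp_continuous_on holomorphic_on_subset[OF dholo]
              holomorphic_on_subset[OF holo]) (use that in auto)
  obtain I1 where I1: "(L has_contour_integral I1) (linepath s (s + 1))"
    using contour_integrable_continuous_linepath[OF cont[OF nz1]] by (auto simp: contour_integrable_on_def)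
  obtain I2 where I2: "(L has_contour_integral I2) (linepath s (s + tau))"
    using contour_integrable_continuous_linepath[OF cont[OF nz2]] by (auto simp: contour_integrable_on_def)
  have P1: "L (x + 1) = L x + 0" for x
    unfolding L_def th_def by (simp add: deriv_jtheta_plus1[OF tim] jtheta_plus1)
  have P2: "L (x + tau) = L x + (- 2 * of_real pi * \<i>)" if "x \<in> closed_segment s (s + 1)" for x
  proof -
    have n: "th x \<noteq> 0" using nz1 that .
    define E where "E = exp (- of_real pi * \<i> * tau - 2 * of_real pi * \<i> * x)"
    have E: "E \<noteq> 0" by (simp add: E_def)
    have a: "deriv th (x + tau) = E * (deriv th x - 2 * of_real pi * \<i> * th x)"
      unfolding th_def E_def by (rule deriv_jtheta_plus_tau[OF tim])
    have b: "th (x + tau) = E * th x" unfolding th_def E_def by (rule jtheta_plus_tau)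
    show ?thesis unfolding L_def a b using n E by (simp add: field_simps)
  qed
  have Iright: "(L has_contour_integral I2) (linepath (s + 1) (s + 1 + tau))"
    using lp_shift_integral[OF I2, of L 1 0] P1 by (simp add: add_ac)
  have Itop': "(L has_contour_integral (I1 + (- 2 * of_real pi * \<i>) * 1)) (linepath (s + tau) (s + 1 + tau))"
    using lp_shift_integral[OF I1, of L tau "- 2 * of_real pi * \<i>"] P2 by (simp add: add_ac)
  have Itop: "(L has_contour_integral (- (I1 - 2 * of_real pi * \<i>))) (linepath (s + 1 + tau) (s + tau))"
    using has_contour_integral_reversepath[OF _ Itop'] by simp
  have Ileft: "(L has_contour_integral (- I2)) (linepath (s + tau) s)"
    using has_contour_integral_reversepath[OF _ I2] by simp
  have "(L has_contour_integral (I1 + (I2 + (- (I1 - 2 * of_real pi * \<i>) + - I2))))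
          (linepath s (s + 1) +++ linepath (s + 1) (s + 1 + tau) +++ linepath (s + 1 + tau) (s + tau) +++ linepath (s + tau) s)"
    by (intro has_contour_integral_join I1 Iright Itop Ileft valid_path_join) auto
  then show ?thesis unfolding R L_def th_def by simp
qed

lemma jtheta_not_const:
  assumes "Re tau = 0" "Im tau > 0" "0 \<in> A" "w0 tau \<in> A"
  shows "\<not> jtheta tau constant_on A"
  using assms jtheta_0_ne[OF assms(1,2)] jtheta_w0[of tau] unfolding constant_on_def by metis

lemma jtheta_zorder_pos:
  assumes "Re tau = 0" "Im tau > 0" "jtheta tau p = 0"
  shows "zorder (jtheta tau) p > 0"
proof -
  have "\<forall>\<^sub>F w in at p. jtheta tau w \<noteq> 0 \<and> w \<in> UNIV"
    by (rule non_zero_neighbour_alt[OF jtheta_holo[OF assms(2)] _ _ _ _ jtheta_0_ne[OF assms(1,2)]]) auto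
  then have "frequently (\<lambda>w. jtheta tau w \<noteq> 0) (at p)"
    by (intro eventually_frequently) (auto elim: eventually_mono)
  then show ?thesis using zorder_pos_iff[OF jtheta_holo[OF assms(2)]] assms(3) by auto
qed

lemma zorder_sum_rect:
  assumes tre: "Re tau = 0" and tim: "Im tau > 0"
    and nz: "\<forall>w\<in>path_image (rectpath s (s + 1 + tau)). jtheta tau w \<noteq> 0"
  shows "finite {p\<in>box s (s + 1 + tau). jtheta tau p = 0}"
    and "(\<Sum>p\<in>{p\<in>box s (s + 1 + tau). jtheta tau p = 0}. zorder (jtheta tau) p) = 1"
proof -
  define th where "th = jtheta tau"
  define a3 where "a3 = s + 1 + tau"
  have lt: "Re s \<le> Re a3" "Im s \<le> Im a3" using tre tim by (auto simp: a3_def)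
  define Rb where "Rb = norm s + 2 + Im tau"
  define S where "S = ball (0::complex) Rb"
  have cboxS: "cbox s a3 \<subseteq> S"
  proof
    fix w assume w: "w \<in> cbox s a3"
    then have "0 \<le> Re (w - s)" "Re (w - s) \<le> 1" "0 \<le> Im (w - s)" "Im (w - s) \<le> Im tau"
      using tre by (auto simp: in_cbox_complex_iff a3_def)
    then have "norm (w - s) \<le> 1 + Im tau" using cmod_le[of "w - s"] by linarith
    then have "norm w \<le> norm s + 1 + Im tau" using norm_triangle_sub[of w s] by linarith
    then show "w \<in> S" unfolding S_def Rb_def by simp
  qed
  have PIsub: "path_image (rectpath s a3) \<subseteq> cbox s a3"
    by (rule path_image_rectpath_subset_cbox) (use lt in auto)
  define pz where "pz = {w\<in>S. th w = 0 \<or> w \<in> {}}"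
  have holo: "th holomorphic_on UNIV" unfolding th_def by (rule jtheta_holo[OF tim])
  have fin: "finite pz"
  proof -
    have "finite {z\<in>cball 0 Rb. th z = 0}"
      by (rule holomorphic_compact_finite_zeros[OF holo]) (use jtheta_not_const[OF tre tim, of UNIV] in \<open>auto simp: th_def\<close>)
    then show ?thesis by (rule rev_finite_subset) (auto simp: pz_def S_def)
  qed
  have AP: "contour_integral (rectpath s a3) (\<lambda>x. deriv th x * (\<lambda>_. 1) x / th x) =
      2 * pi * \<i> * (\<Sum>p\<in>pz. winding_number (rectpath s a3) p * (\<lambda>_. 1) p * zorder th p)"
    unfolding pz_def
  proof (rule argument_principle)
    show "open S" "connected S" by (auto simp: S_def)
    show "th holomorphic_on S - {}" using holo by (rule holomorphic_on_subset) auto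
    show "(\<lambda>_. 1) holomorphic_on S" by simp
    show "valid_path (rectpath s a3)" by simp
    show "pathfinish (rectpath s a3) = pathstart (rectpath s a3)" by simp
    show "path_image (rectpath s a3) \<subseteq> S - {w \<in> S. th w = 0 \<or> w \<in> {}}"
      using PIsub cboxS nz by (auto simp: th_def a3_def)
    show "\<forall>z. z \<notin> S \<longrightarrow> winding_number (rectpath s a3) z = 0"
      using PIsub cboxS by (auto intro!: winding_number_zero_outside[of _ S] simp: S_def)
    show "finite {w \<in> S. th w = 0 \<or> w \<in> {}}" using fin by (simp add: pz_def)
    show "\<forall>p\<in>S \<inter> {}. is_pole th p" by simp
  qed
  have "contour_integral (rectpath s a3) (\<lambda>x. deriv th x * (\<lambda>_. 1) x / th x) = 2 * of_real pi * \<i>"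
    using contour_integral_unique[OF rect_integral[OF tre tim nz]] by (simp add: th_def a3_def)
  with AP have "(\<Sum>p\<in>pz. winding_number (rectpath s a3) p * of_int (zorder th p)) = 1"
    by simp
  moreover have "winding_number (rectpath s a3) p = (if p \<in> box s a3 then 1 else 0)" if "p \<in> pz" for p
  proof -
    have "p \<notin> path_image (rectpath s a3)" using that nz by (auto simp: pz_def th_def a3_def)
    then have "p \<notin> cbox s a3 - box s a3" using path_image_rectpath_cbox_minus_box[OF lt] by simp
    then show ?thesis
      using winding_number_rectpath[of p s a3] winding_number_rectpath_outside[OF lt, of p] by auto
  qed
  ultimately have "(\<Sum>p\<in>pz. if p \<in> box s a3 then of_int (zorder th p) else 0) = (1::complex)"
    by (smt (verit, ccfv_SIG) mult_cancel_right1 mult_eq_0_iff sum.cong)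
  then have "(\<Sum>p\<in>{p\<in>pz. p \<in> box s a3}. of_int (zorder th p)) = (1::complex)"
    by (simp add: sum.inter_filter[OF fin])
  moreover have eqset: "{p\<in>pz. p \<in> box s a3} = {p\<in>box s a3. th p = 0}"
    using cboxS box_subset_cbox[of s a3] by (auto simp: pz_def)
  ultimately have "of_int (\<Sum>p\<in>{p\<in>box s a3. th p = 0}. zorder th p) = (1::complex)" by simp
  then show "(\<Sum>p\<in>{p\<in>box s (s + 1 + tau). jtheta tau p = 0}. zorder (jtheta tau) p) = 1"
    unfolding th_def a3_def by (metis of_int_eq_1_iff)
  show "finite {p\<in>box s (s + 1 + tau). jtheta tau p = 0}"
    using fin eqset by (metis (no_types, lifting) a3_def finite_subset mem_Collect_eq subsetI th_def)
qed

lemma rect_zero_unique: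
  assumes tre: "Re tau = 0" and tim: "Im tau > 0"
    and nz: "\<forall>w\<in>path_image (rectpath s (s + 1 + tau)). jtheta tau w \<noteq> 0"
    and p: "p \<in> box s (s + 1 + tau)" "jtheta tau p = 0"
  shows "zorder (jtheta tau) p = 1 \<and> (\<forall>q\<in>box s (s + 1 + tau). jtheta tau q = 0 \<longrightarrow> q = p)"
proof -
  define Z where "Z = {p\<in>box s (s + 1 + tau). jtheta tau p = 0}"
  have fin: "finite Z" and sum1: "(\<Sum>p\<in>Z. zorder (jtheta tau) p) = 1"
    using zorder_sum_rect[OF tre tim nz] by (auto simp: Z_def)
  have pos: "zorder (jtheta tau) q > 0" if "q \<in> Z" for q
    using jtheta_zorder_pos[OF tre tim] that by (auto simp: Z_def)
  have pZ: "p \<in> Z" using p by (simp add: Z_def)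
  have split: "(\<Sum>p\<in>Z. zorder (jtheta tau) p) = zorder (jtheta tau) p + (\<Sum>q\<in>Z - {p}. zorder (jtheta tau) q)"
    by (rule sum.remove[OF fin pZ])
  have rest: "(\<Sum>q\<in>Z - {p}. zorder (jtheta tau) q) \<ge> 0"
    by (rule sum_nonneg) (use pos in \<open>auto intro: less_imp_le\<close>)
  have "zorder (jtheta tau) p = 1" using split sum1 rest pos[OF pZ] by linarith
  moreover have "q = p" if "q \<in> box s (s + 1 + tau)" "jtheta tau q = 0" for q
  proof (rule ccontr)
    assume "q \<noteq> p"
    then have qZ: "q \<in> Z - {p}" using that by (auto simp: Z_def)
    have "zorder (jtheta tau) q \<le> (\<Sum>q\<in>Z - {p}. zorder (jtheta tau) q)"
      by (rule member_le_sum[OF qZ]) (use pos fin in \<open>auto intro: less_imp_le\<close>)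
    then show False using split sum1 pos[OF pZ] pos[of q] qZ by auto
  qed
  ultimately show ?thesis by blast
qed

lemma finite_avoid:
  fixes a b :: real
  assumes "a < b" "finite B"
  shows "\<exists>x. a < x \<and> x < b \<and> x \<notin> B"
proof -
  have "infinite ({a<..<b} - B)" using assms by (simp add: Diff_infinite_finite)
  then obtain x where "x \<in> {a<..<b} - B" by (metis ex_in_conv finite.emptyI)
  then show ?thesis by auto
qed

lemma good_rect:
  assumes tre: "Re tau = 0" and tim: "Im tau > 0"
    and d: "\<bar>Re p1 - Re p2\<bar> < 1" "\<bar>Im p1 - Im p2\<bar> < Im tau"
  shows "\<exists>s. p1 \<in> box s (s + 1 + tau) \<and> p2 \<in> box s (s + 1 + tau) \<and>
             (\<forall>w\<in>path_image (rectpath s (s + 1 + tau)). jtheta tau w \<noteq> 0)"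
proof -
  define t where "t = Im tau"
  define Z where "Z = {z\<in>cball p1 (1 + t). jtheta tau z = 0}"
  have finZ: "finite Z" unfolding Z_def
    by (rule holomorphic_compact_finite_zeros[OF jtheta_holo[OF tim]]) (use jtheta_not_const[OF tre tim, of UNIV] in auto)
  have ltx: "max (Re p1) (Re p2) - 1 < min (Re p1) (Re p2)"
    using d(1) by (cases "Re p1 \<le> Re p2") (auto simp: max_def min_def)
  have lty: "max (Im p1) (Im p2) - t < min (Im p1) (Im p2)"
    using d(2) by (cases "Im p1 \<le> Im p2") (auto simp: max_def min_def t_def)
  obtain x0 where x0: "max (Re p1) (Re p2) - 1 < x0" "x0 < min (Re p1) (Re p2)"
      "x0 \<notin> Re ` Z \<union> (\<lambda>x. x - 1) ` Re ` Z"
    using finite_avoid[OF ltx, of "Re ` Z \<union> (\<lambda>x. x - 1) ` Re ` Z"] finZ by blast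
  obtain y0 where y0: "max (Im p1) (Im p2) - t < y0" "y0 < min (Im p1) (Im p2)"
      "y0 \<notin> Im ` Z \<union> (\<lambda>y. y - t) ` Im ` Z"
    using finite_avoid[OF lty, of "Im ` Z \<union> (\<lambda>y. y - t) ` Im ` Z"] finZ by blast
  define s where "s = Complex x0 y0"
  have re3: "Re (s + 1 + tau) = x0 + 1" and im3: "Im (s + 1 + tau) = y0 + t"
    using tre by (auto simp: s_def t_def)
  have xx: "Re p1 < x0 + 1" "Re p2 < x0 + 1" "x0 < Re p1" "x0 < Re p2" using x0(1,2) by (auto simp: max_def min_def split: if_splits)
  have yy: "Im p1 < y0 + t" "Im p2 < y0 + t" "y0 < Im p1" "y0 < Im p2" using y0(1,2) by (auto simp: max_def min_def split: if_splits)
  have inb: "p1 \<in> box s (s + 1 + tau)" "p2 \<in> box s (s + 1 + tau)"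
    using xx yy tre by (auto simp: in_box_complex_iff s_def t_def)
  have le: "Re s \<le> Re (s + 1 + tau)" "Im s \<le> Im (s + 1 + tau)"
    using tim tre by (auto simp: s_def t_def)
  have "jtheta tau w \<noteq> 0" if w: "w \<in> path_image (rectpath s (s + 1 + tau))" for w
  proof
    assume z: "jtheta tau w = 0"
    from w have wc: "w \<in> cbox s (s + 1 + tau) - box s (s + 1 + tau)"
      using path_image_rectpath_cbox_minus_box[OF le] by simp
    then have r: "x0 \<le> Re w" "Re w \<le> x0 + 1" "y0 \<le> Im w" "Im w \<le> y0 + t"
      and bd: "Re w = x0 \<or> Re w = x0 + 1 \<or> Im w = y0 \<or> Im w = y0 + t"
      using tre by (auto simp: in_box_complex_iff in_cbox_complex_iff s_def t_def)
    have "\<bar>Re (w - p1)\<bar> \<le> 1" "\<bar>Im (w - p1)\<bar> \<le> t" using r xx yy by auto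
    then have "norm (w - p1) \<le> 1 + t" using cmod_le[of "w - p1"] by linarith
    then have "w \<in> Z" using z by (simp add: Z_def dist_norm norm_minus_commute)
    then show False using bd x0(3) y0(3) by (auto simp: image_iff)
  qed
  then show ?thesis using inb by blast
qed

lemma jtheta_zero_iff:
  assumes tre: "Re tau = 0" and tim: "Im tau > 0"
  shows "jtheta tau p = 0 \<longleftrightarrow> (\<exists>m n::int. p = w0 tau + of_int m + of_int n * tau)"
proof
  assume "\<exists>m n::int. p = w0 tau + of_int m + of_int n * tau"
  then show "jtheta tau p = 0" using jtheta_lattice_zero jtheta_w0 by metis
next
  assume z: "jtheta tau p = 0"
  define t where "t = Im tau"
  have t: "t > 0" using tim by (simp add: t_def)
  define m0 where "m0 = \<lfloor>Re p\<rfloor>"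
  define n0 where "n0 = \<lfloor>Im p / t\<rfloor>"
  define p' where "p' = p + of_int (- m0) + of_int (- n0) * tau"
  have zp: "jtheta tau p' = 0" using z unfolding p'_def by (subst jtheta_lattice_zero)
  have rp: "Re p' = Re p - of_int m0" using tre by (simp add: p'_def)
  have ip: "Im p' = Im p - of_int n0 * t" by (simp add: p'_def t_def)
  have "0 \<le> Re p'" "Re p' < 1" unfolding rp m0_def by linarith+
  moreover have "0 \<le> Im p'" "Im p' < t"
  proof -
    have "of_int n0 \<le> Im p / t" "Im p / t < of_int n0 + 1" unfolding n0_def by linarith+
    then have "of_int n0 * t \<le> Im p" "Im p < (of_int n0 + 1) * t" using t by (auto simp: field_simps)
    then show "0 \<le> Im p'" "Im p' < t" unfolding ip by (auto simp: algebra_simps)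
  qed
  moreover have "Re (w0 tau) = 1/2" "Im (w0 tau) = t/2" using tre by (auto simp: w0_def t_def)
  ultimately have d: "\<bar>Re p' - Re (w0 tau)\<bar> < 1" "\<bar>Im p' - Im (w0 tau)\<bar> < Im tau"
    using t by (auto simp: t_def)
  obtain s where s: "p' \<in> box s (s + 1 + tau)" "w0 tau \<in> box s (s + 1 + tau)"
      "\<forall>w\<in>path_image (rectpath s (s + 1 + tau)). jtheta tau w \<noteq> 0"
    using good_rect[OF tre tim d] by blast
  have "p' = w0 tau" using rect_zero_unique[OF tre tim s(3) s(2) jtheta_w0] s(1) zp by blast
  then have "p = w0 tau + of_int m0 + of_int n0 * tau" by (simp add: p'_def algebra_simps)
  then show "\<exists>m n::int. p = w0 tau + of_int m + of_int n * tau" by blast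
qed

lemma jtheta_zorder_1:
  assumes tre: "Re tau = 0" and tim: "Im tau > 0" and z: "jtheta tau p = 0"
  shows "zorder (jtheta tau) p = 1"
proof -
  obtain s where s: "p \<in> box s (s + 1 + tau)" "\<forall>w\<in>path_image (rectpath s (s + 1 + tau)). jtheta tau w \<noteq> 0"
    using good_rect[OF tre tim, of p p] tim by auto
  show ?thesis using rect_zero_unique[OF tre tim s(2) s(1) z] by blast
qed



lemma jtheta_shift_analytic:
  assumes "Im tau > 0"
  shows "(\<lambda>z. jtheta tau (z - c)) holomorphic_on UNIV"
  by (rule holomorphic_on_compose_gen[OF _ jtheta_holo[OF assms], unfolded o_def]) (auto intro!: holomorphic_intros)

lemma zorder_shift_jtheta:
  assumes tre: "Re tau = 0" and tim: "Im tau > 0"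
  shows "zorder (\<lambda>z. jtheta tau (z - c)) p = (if jtheta tau (p - c) = 0 then 1 else 0)"
proof -
  have "zorder (\<lambda>z. jtheta tau (z - c)) p = zorder (\<lambda>u. jtheta tau (u + p - c)) 0"
    by (subst zorder_shift) (simp add: algebra_simps)
  also have "\<dots> = zorder (jtheta tau) (p - c)"
    by (subst zorder_shift[of _ "p - c"]) (simp add: algebra_simps)
  also have "\<dots> = (if jtheta tau (p - c) = 0 then 1 else 0)"
  proof (cases "jtheta tau (p - c) = 0")
    case True then show ?thesis using jtheta_zorder_1[OF tre tim] by simp
  next
    case False
    have "jtheta tau analytic_on {p - c}"
      using jtheta_holo[OF tim] analytic_on_holomorphic by blast
    then show ?thesis using False zorder_eq_0I by simp
  qed
  finally show ?thesis .
qed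

lemma eventually_jtheta_shift_ne:
  assumes tre: "Re tau = 0" and tim: "Im tau > 0"
  shows "\<forall>\<^sub>F z in at p. jtheta tau (z - c) \<noteq> 0"
proof -
  have "\<forall>\<^sub>F z in at p. jtheta tau (z - c) \<noteq> 0 \<and> z \<in> UNIV"
    by (rule non_zero_neighbour_alt[OF jtheta_shift_analytic[OF tim], where \<beta>=c]) (auto simp: jtheta_0_ne[OF tre tim])
  then show ?thesis by (auto elim: eventually_mono)
qed

lemma zorder_prod_jtheta:
  assumes tre: "Re tau = 0" and tim: "Im tau > 0" and fin: "finite J"
  shows "zorder (\<lambda>z. \<Prod>j\<in>J. jtheta tau (z - a j)) p = int (card {j\<in>J. jtheta tau (p - a j) = 0})"
proof -
  have "zorder (\<lambda>z. \<Prod>j\<in>J. jtheta tau (z - a j)) p = (\<Sum>j\<in>J. zorder (\<lambda>z. jtheta tau (z - a j)) p)"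
  proof (rule zorder_prod_analytic)
    show "(\<lambda>z. jtheta tau (z - a j)) analytic_on {p}" for j
      using jtheta_shift_analytic[OF tim] analytic_on_holomorphic by blast
    have "\<forall>\<^sub>F z in at p. \<forall>j\<in>J. jtheta tau (z - a j) \<noteq> 0"
      by (rule eventually_ball_finite[OF fin]) (auto intro: eventually_jtheta_shift_ne[OF tre tim])
    then show "\<forall>\<^sub>F z in at p. (\<Prod>j\<in>J. jtheta tau (z - a j)) \<noteq> 0"
      by (rule eventually_mono) (simp add: fin)
  qed
  also have "\<dots> = (\<Sum>j\<in>J. if jtheta tau (p - a j) = 0 then 1 else 0)"
    by (simp add: zorder_shift_jtheta[OF tre tim])
  also have "\<dots> = int (card {j\<in>J. jtheta tau (p - a j) = 0})"
    using fin by (simp add: sum.If_cases Int_def conj_commute)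
  finally show ?thesis .
qed

lemma even_zorder_real:
  fixes f :: "complex \<Rightarrow> complex" and x0 :: real
  assumes holo: "f holomorphic_on UNIV"
    and real: "\<And>x::real. f (of_real x) \<in> \<real>"
    and sign: "(\<forall>x::real. Re (f (of_real x)) \<ge> 0) \<or> (\<forall>x::real. Re (f (of_real x)) \<le> 0)"
    and nz: "\<exists>w. f w \<noteq> 0"
  shows "even (nat (zorder f (of_real x0)))"
proof -
  define k where "k = nat (zorder f (of_real x0))"
  obtain r where r: "r > 0" "zor_poly f (of_real x0) holomorphic_on cball (of_real x0) r"
      "\<forall>w\<in>cball (of_real x0) r. f w = zor_poly f (of_real x0) w * (w - of_real x0) ^ k \<and> zor_poly f (of_real x0) w \<noteq> 0"
    using zorder_exist_zero[OF holo, of "of_real x0"] nz unfolding k_def by auto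
  define g where "g = zor_poly f (of_real x0)"
  have gh: "g holomorphic_on cball (of_real x0) r" using r(2) by (simp add: g_def)
  have fg: "f w = g w * (w - of_real x0) ^ k" "g w \<noteq> 0" if "w \<in> cball (of_real x0) r" for w
    using r(3) that by (auto simp: g_def)
  have inc: "(of_real s :: complex) \<in> cball (of_real x0) r" if "x0 - r \<le> s" "s \<le> x0 + r" for s
  proof -
    have "dist (complex_of_real x0) (of_real s) = norm (complex_of_real (x0 - s))"
      by (simp add: dist_norm)
    also have "\<dots> = \<bar>x0 - s\<bar>" by (rule norm_of_real)
    finally show ?thesis using that by (simp add: abs_le_iff)
  qed
  have greal1: "g (of_real s) \<in> \<real>" if "x0 - r \<le> s" "s \<le> x0 + r" "s \<noteq> x0" for s
  proof -
    have "f (of_real s) = g (of_real s) * (of_real (s - x0)) ^ k" using fg(1)[OF inc[OF that(1,2)]] by simp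
    moreover have "of_real (s - x0) ^ k \<noteq> (0::complex)" using that(3) by simp
    ultimately have "g (of_real s) = f (of_real s) / of_real ((s - x0) ^ k)" by (simp add: field_simps)
    then show ?thesis using real[of s] by (simp add: Reals_divide)
  qed
  have cont: "continuous_on (cball (of_real x0) r) g" using gh holomorphic_on_imp_continuous_on by blast
  have "isCont g (of_real x0)"
    using continuous_on_interior[OF cont] r(1) by (simp add: interior_cball)
  moreover have u: "(\<lambda>n. of_real (x0 + r / real (Suc n)) :: complex) \<longlonglongrightarrow> of_real x0"
  proof -
    have "(\<lambda>n. r * inverse (real (Suc n))) \<longlonglongrightarrow> r * 0"
      by (intro tendsto_mult tendsto_const LIMSEQ_inverse_real_of_nat)
    then have "(\<lambda>n. x0 + r / real (Suc n)) \<longlonglongrightarrow> x0 + 0"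
      by (intro tendsto_add tendsto_const) (simp add: divide_inverse)
    then show ?thesis by (intro tendsto_of_real) simp
  qed
  ultimately have "(\<lambda>n. g (of_real (x0 + r / real (Suc n)))) \<longlonglongrightarrow> g (of_real x0)"
    by (rule isCont_tendsto_compose)
  then have lim: "(\<lambda>n. Im (g (of_real (x0 + r / real (Suc n))))) \<longlonglongrightarrow> Im (g (of_real x0))"
    by (rule tendsto_Im)
  have zer: "Im (g (of_real (x0 + r / real (Suc n)))) = 0" for n
  proof -
    have "0 < r / real (Suc n)" "r / real (Suc n) \<le> r" using r(1) by (auto simp: field_simps)
    then show ?thesis using greal1[of "x0 + r / real (Suc n)"] by (auto simp: complex_is_Real_iff)
  qed
  have "(\<lambda>n. Im (g (of_real (x0 + r / real (Suc n))))) = (\<lambda>n. 0)" using zer by (rule ext)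
  with lim have "(\<lambda>n. 0::real) \<longlonglongrightarrow> Im (g (of_real x0))" by simp
  then have "Im (g (of_real x0)) = 0" using LIMSEQ_unique tendsto_const by blast
  then have greal: "g (of_real s) = of_real (Re (g (of_real s)))" if "x0 - r \<le> s" "s \<le> x0 + r" for s
    using greal1[OF that] by (cases "s = x0") (auto simp: complex_eq_iff complex_is_Real_iff)
  define phi where "phi = (\<lambda>s. Re (g (of_real s)))"
  have phic: "continuous_on {x0 - r..x0 + r} phi"
    unfolding phi_def
    by (intro continuous_on_compose2[OF continuous_on_Re[OF continuous_on_id]] continuous_on_compose2[OF cont] continuous_intros)
       (auto intro: inc)
  have phinz: "phi s \<noteq> 0" if "x0 - r \<le> s" "s \<le> x0 + r" for s
    using greal[OF that] fg(2)[OF inc[OF that]] by (auto simp: phi_def)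
  have same: "phi (x0 - r) * phi (x0 + r) > 0"
  proof (rule ccontr)
    assume "\<not> ?thesis"
    then have c: "phi (x0 - r) \<le> 0 \<and> 0 \<le> phi (x0 + r) \<or> phi (x0 + r) \<le> 0 \<and> 0 \<le> phi (x0 - r)"
      unfolding zero_less_mult_iff by linarith
    have le: "x0 - r \<le> x0 + r" using r(1) by simp
    show False
    proof (cases "phi (x0 - r) \<le> 0 \<and> 0 \<le> phi (x0 + r)")
      case True
      obtain s where "x0 - r \<le> s" "s \<le> x0 + r" "phi s = 0"
        using IVT'[of phi "x0 - r" 0 "x0 + r", OF _ _ le phic] True by blast
      then show False using phinz by blast
    next
      case False
      with c have h: "phi (x0 + r) \<le> 0" "0 \<le> phi (x0 - r)" by auto
      obtain s where "x0 - r \<le> s" "s \<le> x0 + r" "phi s = 0"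
        using IVT2'[of phi "x0 + r" 0 "x0 - r", OF h le phic] by blast
      then show False using phinz by blast
    qed
  qed
  have f1: "Re (f (of_real (x0 + r))) = phi (x0 + r) * r ^ k"
  proof -
    have "f (of_real (x0 + r)) = g (of_real (x0 + r)) * of_real r ^ k"
      using fg(1)[OF inc[of "x0 + r"]] r(1) by simp
    also have "\<dots> = of_real (phi (x0 + r) * r ^ k)" using greal[of "x0 + r"] r(1) by (simp add: phi_def)
    finally show ?thesis by simp
  qed
  have f2: "Re (f (of_real (x0 - r))) = phi (x0 - r) * (- r) ^ k"
  proof -
    have "f (of_real (x0 - r)) = g (of_real (x0 - r)) * of_real (- r) ^ k"
      using fg(1)[OF inc[of "x0 - r"]] r(1) by simp
    also have "\<dots> = of_real (phi (x0 - r) * (- r) ^ k)" using greal[of "x0 - r"] r(1) by (simp add: phi_def)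
    finally show ?thesis by simp
  qed
  show ?thesis
  proof (rule ccontr)
    assume odd: "\<not> even (nat (zorder f (of_real x0)))"
    then have "(- r) ^ k = - (r ^ k)" unfolding k_def by (simp add: power_minus_odd)
    then have "Re (f (of_real (x0 + r))) * Re (f (of_real (x0 - r))) = - (phi (x0 - r) * phi (x0 + r)) * (r ^ k) ^ 2"
      using f1 f2 by (simp add: power2_eq_square algebra_simps)
    moreover have "(r ^ k) ^ 2 > 0" using r(1) by simp
    ultimately have "Re (f (of_real (x0 + r))) * Re (f (of_real (x0 - r))) < 0"
      using same by (simp add: mult_pos_pos)
    moreover have "Re (f (of_real (x0 + r))) * Re (f (of_real (x0 - r))) \<ge> 0"
    proof -
      have A: "Re (f (of_real (x0 + r))) = Re (f (of_real (x0 + r)))" ..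
      from sign show ?thesis
      proof
        assume h: "\<forall>x::real. Re (f (of_real x)) \<ge> 0"
        show ?thesis by (rule mult_nonneg_nonneg) (use h in blast)+
      next
        assume h: "\<forall>x::real. Re (f (of_real x)) \<le> 0"
        show ?thesis by (rule mult_nonpos_nonpos) (use h in blast)+
      qed
    qed
    ultimately show False by linarith
  qed
qed



definition lat :: "complex \<Rightarrow> complex \<Rightarrow> complex \<Rightarrow> bool" where
  "lat tau x y \<longleftrightarrow> (\<exists>m n::int. x - y = of_int m + of_int n * tau)"

lemma lat_refl: "lat tau x x"
  unfolding lat_def by (rule exI[of _ 0], rule exI[of _ 0]) simp

lemma lat_sym: "lat tau x y \<Longrightarrow> lat tau y x"
  unfolding lat_def by (metis (no_types, opaque_lifting) minus_diff_eq minus_add_distrib mult_minus_left of_int_minus)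

lemma lat_trans: "lat tau x y \<Longrightarrow> lat tau y z \<Longrightarrow> lat tau x z"
proof -
  assume "lat tau x y" "lat tau y z"
  then obtain m n m' n' :: int where "x - y = of_int m + of_int n * tau" "y - z = of_int m' + of_int n' * tau"
    unfolding lat_def by blast
  then have "x - z = of_int (m + m') + of_int (n + n') * tau" by (simp add: algebra_simps)
  then show ?thesis unfolding lat_def by blast
qed

lemma lat_cnj:
  assumes "Re tau = 0" "lat tau x y"
  shows "lat tau (cnj x) (cnj y)"
proof -
  have c: "cnj tau = - tau" using assms(1) by (simp add: complex_eq_iff)
  obtain m n :: int where "x - y = of_int m + of_int n * tau" using assms(2) unfolding lat_def by blast
  then have "cnj x - cnj y = of_int m + of_int (- n) * tau"
    by (metis c complex_cnj_add complex_cnj_diff complex_cnj_mult complex_cnj_of_int mult_minus_left mult_minus_right of_int_minus)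
  then show ?thesis unfolding lat_def by blast
qed

lemma lat_cnj_iff:
  assumes "Re tau = 0"
  shows "lat tau (cnj x) (cnj y) \<longleftrightarrow> lat tau x y"
  using lat_cnj[OF assms, of "cnj x" "cnj y"] lat_cnj[OF assms, of x y] by auto

lemma lat_Im:
  assumes "Re tau = 0" "lat tau x y"
  shows "\<exists>n::int. Im x - Im y = of_int n * Im tau"
proof -
  obtain m n :: int where "x - y = of_int m + of_int n * tau" using assms(2) unfolding lat_def by blast
  then have "Im (x - y) = of_int n * Im tau" by simp
  then show ?thesis by auto
qed

lemma lat_rep:
  assumes tre: "Re tau = 0" and tim: "Im tau > 0"
  shows "\<exists>r. lat tau x r \<and> - Im tau / 2 \<le> Im r \<and> Im r < Im tau / 2"
proof -
  define t where "t = Im tau"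
  have t: "t > 0" using tim by (simp add: t_def)
  define n0 where "n0 = \<lfloor>(Im x + t / 2) / t\<rfloor>"
  define r where "r = x - of_int n0 * tau"
  have "lat tau x r" unfolding lat_def r_def by (rule exI[of _ 0], rule exI[of _ n0]) simp
  moreover have "Im r = Im x - of_int n0 * t" by (simp add: r_def t_def)
  moreover have "of_int n0 \<le> (Im x + t / 2) / t" "(Im x + t / 2) / t < of_int n0 + 1" unfolding n0_def by linarith+
  then have "of_int n0 * t \<le> Im x + t / 2" "Im x + t / 2 < (of_int n0 + 1) * t" using t by (auto simp: field_simps)
  ultimately show ?thesis by (auto simp: t_def algebra_simps)
qed

lemma lat_self_cnj:
  assumes tre: "Re tau = 0" and tim: "Im tau > 0"
    and "- Im tau / 2 \<le> Im r" "Im r < Im tau / 2" "lat tau r (cnj r)"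
  shows "Im r = 0 \<or> Im r = - Im tau / 2"
proof -
  obtain n :: int where n: "Im r - Im (cnj r) = of_int n * Im tau" using lat_Im[OF tre assms(5)] by blast
  then have "2 * Im r = of_int n * Im tau" by simp
  with assms(3,4) have a: "(-1) * Im tau \<le> of_int n * Im tau" "of_int n * Im tau < 1 * Im tau" by linarith+
  have "-1 \<le> (of_int n :: real)" using mult_right_le_imp_le[OF a(1)] tim by simp
  moreover have "of_int n < (1::real)" using mult_right_less_imp_less[OF a(2)] tim by simp
  ultimately have "-1 \<le> (of_int n::real)" "of_int n < (1::real)" by auto
  then have "n = -1 \<or> n = 0" by linarith
  then show ?thesis using n by auto
qed

lemma lat_half_cnj:
  assumes tre: "Re tau = 0" and "Im w = - Im tau / 2"
  shows "lat tau w (cnj w)"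
proof -
  have "w - cnj w = of_int 0 + of_int (-1) * tau" using assms by (simp add: complex_eq_iff)
  then show ?thesis unfolding lat_def by blast
qed

lemma lat_real_half:
  assumes tre: "Re tau = 0" and tim: "Im tau > 0" and "Im r = 0" "Im w = - Im tau / 2"
  shows "\<not> lat tau r w"
proof
  assume "lat tau r w"
  then obtain n :: int where n: "Im r - Im w = of_int n * Im tau" using lat_Im[OF tre] by blast
  then have "Im tau * (1/2) = Im tau * of_int n" using assms by (simp add: algebra_simps)
  then have "of_int n = (1/2::real)" using tim by simp
  then have "of_int (2 * n) = (1::real)" by simp
  then have "2 * n = 1" by (simp only: of_int_eq_1_iff)
  then show False by presburger
qed

lemma card_filter_remove1:
  assumes "finite J" "j0 \<in> J"
  shows "card {j\<in>J. P j} = card {j\<in>J - {j0}. P j} + (if P j0 then 1 else 0)"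
proof (cases "P j0")
  case True
  then have "{j\<in>J. P j} = insert j0 {j\<in>J - {j0}. P j}" using assms(2) by auto
  then show ?thesis using True assms(1) by simp
next
  case False
  then have "{j\<in>J. P j} = {j\<in>J - {j0}. P j}" by auto
  then show ?thesis using False by simp
qed

lemma comb:
  assumes tre: "Re tau = 0" and tim: "Im tau > 0"
  shows "finite J \<Longrightarrow> (\<forall>w. card {j\<in>J. lat tau (a j) w} = card {j\<in>J. lat tau (cnj (a j)) w}) \<Longrightarrow>
         (\<forall>w. Im w = - Im tau / 2 \<longrightarrow> even (card {j\<in>J. lat tau (a j) w})) \<Longrightarrow>
         \<exists>b \<sigma>. \<forall>j\<in>J. \<sigma> j \<in> J \<and> \<sigma> (\<sigma> j) = j \<and> b (\<sigma> j) = cnj (b j) \<and> (\<sigma> j = j \<longrightarrow> Im (b j) = 0)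
                 \<and> lat tau (a j) (b j) \<and> \<bar>Im (b j)\<bar> < Im tau"
proof (induction "card J" arbitrary: J rule: less_induct)
  case less
  note fin = less.prems(1) and cnt = less.prems(2) and ev = less.prems(3)
  show ?case
  proof (cases "J = {}")
    case True then show ?thesis by auto
  next
    case False
    then obtain j0 where j0: "j0 \<in> J" by blast
    obtain r where r: "lat tau (a j0) r" "- Im tau / 2 \<le> Im r" "Im r < Im tau / 2"
      using lat_rep[OF tre tim] by blast
    have rb: "\<bar>Im r\<bar> < Im tau" "\<bar>Im (cnj r)\<bar> < Im tau" using r(2,3) tim by auto
    have e0: "lat tau (a j0) w \<longleftrightarrow> lat tau r w" for w
      using r(1) lat_sym lat_trans by metis
    have e0c: "lat tau (cnj (a j0)) w \<longleftrightarrow> lat tau (cnj r) w" for w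
      using lat_cnj[OF tre r(1)] lat_sym lat_trans by metis
    show ?thesis
    proof (cases "Im r = 0")
      case True
      define J' where "J' = J - {j0}"
      have finJ': "finite J'" using fin by (simp add: J'_def)
      have cJ': "card J' < card J" unfolding J'_def by (rule card_Diff1_less[OF fin j0])
      have rc: "cnj r = r" using True by (simp add: complex_eq_iff)
      have cnt': "\<forall>w. card {j\<in>J'. lat tau (a j) w} = card {j\<in>J'. lat tau (cnj (a j)) w}"
      proof
        fix w
        have "card {j\<in>J'. lat tau (a j) w} + (if lat tau (a j0) w then 1 else 0)
            = card {j\<in>J'. lat tau (cnj (a j)) w} + (if lat tau (cnj (a j0)) w then 1 else 0)"
          using cnt card_filter_remove1[OF fin j0, of "\<lambda>j. lat tau (a j) w"]
                card_filter_remove1[OF fin j0, of "\<lambda>j. lat tau (cnj (a j)) w"] by (simp add: J'_def)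
        then show "card {j\<in>J'. lat tau (a j) w} = card {j\<in>J'. lat tau (cnj (a j)) w}"
          using e0 e0c rc by (auto split: if_splits)
      qed
      have ev': "\<forall>w. Im w = - Im tau / 2 \<longrightarrow> even (card {j\<in>J'. lat tau (a j) w})"
      proof (intro allI impI)
        fix w assume w: "Im w = - Im tau / 2"
        have "\<not> lat tau (a j0) w" using e0 lat_real_half[OF tre tim True w] by blast
        moreover have "even (card {j\<in>J. lat tau (a j) w})" using ev w by blast
        ultimately show "even (card {j\<in>J'. lat tau (a j) w})"
          using card_filter_remove1[OF fin j0, of "\<lambda>j. lat tau (a j) w"] unfolding J'_def by simp
      qed
      obtain b \<sigma> where IH: "\<forall>j\<in>J'. \<sigma> j \<in> J' \<and> \<sigma> (\<sigma> j) = j \<and> b (\<sigma> j) = cnj (b j) \<and> (\<sigma> j = j \<longrightarrow> Im (b j) = 0)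
                 \<and> lat tau (a j) (b j) \<and> \<bar>Im (b j)\<bar> < Im tau"
        using less.hyps[OF cJ' finJ' cnt' ev'] by blast
      define b' where "b' = b(j0 := r)"
      define \<sigma>' where "\<sigma>' = \<sigma>(j0 := j0)"
      have "\<forall>j\<in>J. \<sigma>' j \<in> J \<and> \<sigma>' (\<sigma>' j) = j \<and> b' (\<sigma>' j) = cnj (b' j) \<and> (\<sigma>' j = j \<longrightarrow> Im (b' j) = 0)
                 \<and> lat tau (a j) (b' j) \<and> \<bar>Im (b' j)\<bar> < Im tau"
      proof
        fix j assume j: "j \<in> J"
        show "\<sigma>' j \<in> J \<and> \<sigma>' (\<sigma>' j) = j \<and> b' (\<sigma>' j) = cnj (b' j) \<and> (\<sigma>' j = j \<longrightarrow> Im (b' j) = 0)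
                 \<and> lat tau (a j) (b' j) \<and> \<bar>Im (b' j)\<bar> < Im tau"
        proof (cases "j = j0")
          case True
          then show ?thesis using j0 rc r(1) rb True \<open>Im r = 0\<close> by (simp add: b'_def \<sigma>'_def)
        next
          case False
          then have jJ': "j \<in> J'" using j by (simp add: J'_def)
          then have "\<sigma> j \<in> J'" using IH by blast
          then have "\<sigma> j \<noteq> j0" by (simp add: J'_def)
          then show ?thesis using IH jJ' False by (simp add: b'_def \<sigma>'_def J'_def)
        qed
      qed
      then show ?thesis by blast
    next
      case False
      have "\<exists>j1. j1 \<in> J \<and> j1 \<noteq> j0 \<and> lat tau (a j1) (cnj r)"
      proof (cases "lat tau r (cnj r)")
        case True
        then have hr: "Im r = - Im tau / 2" using lat_self_cnj[OF tre tim r(2,3) True] False by blast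
        have "even (card {j\<in>J. lat tau (a j) r})" using ev hr by blast
        moreover have "j0 \<in> {j\<in>J. lat tau (a j) r}" using j0 r(1) by simp
        moreover have "finite {j\<in>J. lat tau (a j) r}" using fin by simp
        ultimately have "card {j\<in>J. lat tau (a j) r} \<noteq> 0" "card {j\<in>J. lat tau (a j) r} \<noteq> 1"
          by (auto simp: card_0_eq)
        then have "card {j\<in>J. lat tau (a j) r} \<ge> 2" by linarith
        then have "card ({j\<in>J. lat tau (a j) r} - {j0}) \<ge> 1"
          using \<open>j0 \<in> {j\<in>J. lat tau (a j) r}\<close> fin by simp
        then obtain j1 where "j1 \<in> {j\<in>J. lat tau (a j) r} - {j0}"
          by (metis card.empty ex_in_conv not_one_le_zero)
        then show ?thesis using True lat_trans by blast
      next
        case False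
        have "card {j\<in>J. lat tau (a j) (cnj r)} = card {j\<in>J. lat tau (cnj (a j)) (cnj r)}" using cnt by blast
        also have "\<dots> = card {j\<in>J. lat tau (a j) r}" by (simp add: lat_cnj_iff[OF tre])
        finally have ceq: "card {j\<in>J. lat tau (a j) (cnj r)} = card {j\<in>J. lat tau (a j) r}" .
        have "j0 \<in> {j\<in>J. lat tau (a j) r}" using j0 r(1) by simp
        then have "card {j\<in>J. lat tau (a j) r} > 0" using fin by (auto simp: card_gt_0_iff)
        then have "card {j\<in>J. lat tau (a j) (cnj r)} \<noteq> 0" using ceq by linarith
        then have "{j\<in>J. lat tau (a j) (cnj r)} \<noteq> {}" by (metis card.empty)
        then obtain j1 where j1: "j1 \<in> J" "lat tau (a j1) (cnj r)" by blast
        have "j1 \<noteq> j0" using j1(2) False e0 by blast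
        then show ?thesis using j1 by blast
      qed
      then obtain j1 where j1: "j1 \<in> J" "j1 \<noteq> j0" "lat tau (a j1) (cnj r)" by blast
      have e1: "lat tau (a j1) w \<longleftrightarrow> lat tau (cnj r) w" for w
        using j1(3) lat_sym lat_trans by metis
      have e1c: "lat tau (cnj (a j1)) w \<longleftrightarrow> lat tau r w" for w
      proof -
        have "lat tau (cnj (a j1)) r" using lat_cnj[OF tre j1(3)] by simp
        then show ?thesis using lat_sym lat_trans by metis
      qed
      define J1 where "J1 = J - {j0}"
      define J' where "J' = J1 - {j1}"
      have finJ1: "finite J1" using fin by (simp add: J1_def)
      have j1J1: "j1 \<in> J1" using j1 by (simp add: J1_def)
      have finJ': "finite J'" using finJ1 by (simp add: J'_def)
      have "card J' < card J1" unfolding J'_def by (rule card_Diff1_less[OF finJ1 j1J1])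
      moreover have "card J1 < card J" unfolding J1_def by (rule card_Diff1_less[OF fin j0])
      ultimately have cJ': "card J' < card J" by linarith
      have two: "card {j\<in>J. P j} = card {j\<in>J'. P j} + (if P j0 then 1 else 0) + (if P j1 then 1 else 0)" for P
        using card_filter_remove1[OF fin j0, of P] card_filter_remove1[OF finJ1 j1J1, of P]
        by (simp add: J1_def J'_def)
      have cnt': "\<forall>w. card {j\<in>J'. lat tau (a j) w} = card {j\<in>J'. lat tau (cnj (a j)) w}"
      proof
        fix w
        show "card {j\<in>J'. lat tau (a j) w} = card {j\<in>J'. lat tau (cnj (a j)) w}"
          using cnt two[of "\<lambda>j. lat tau (a j) w"] two[of "\<lambda>j. lat tau (cnj (a j)) w"] e0 e0c e1 e1c
          by (simp split: if_splits)
      qed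
      have ev': "\<forall>w. Im w = - Im tau / 2 \<longrightarrow> even (card {j\<in>J'. lat tau (a j) w})"
      proof (intro allI impI)
        fix w assume w: "Im w = - Im tau / 2"
        have hw: "lat tau (cnj w) w" using lat_sym[OF lat_half_cnj[OF tre w]] .
        have "lat tau r w \<longleftrightarrow> lat tau (cnj r) w"
        proof
          assume "lat tau r w"
          then have "lat tau (cnj r) (cnj w)" by (rule lat_cnj[OF tre])
          then show "lat tau (cnj r) w" using hw lat_trans by blast
        next
          assume "lat tau (cnj r) w"
          then have "lat tau r (cnj w)" using lat_cnj[OF tre, of "cnj r" w] by simp
          then show "lat tau r w" using hw lat_trans by blast
        qed
        then show "even (card {j\<in>J'. lat tau (a j) w})"
          using ev w two[of "\<lambda>j. lat tau (a j) w"] e0 e1 by (auto split: if_splits)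
      qed
      obtain b \<sigma> where IH: "\<forall>j\<in>J'. \<sigma> j \<in> J' \<and> \<sigma> (\<sigma> j) = j \<and> b (\<sigma> j) = cnj (b j) \<and> (\<sigma> j = j \<longrightarrow> Im (b j) = 0)
                 \<and> lat tau (a j) (b j) \<and> \<bar>Im (b j)\<bar> < Im tau"
        using less.hyps[OF cJ' finJ' cnt' ev'] by blast
      define b' where "b' = b(j0 := r, j1 := cnj r)"
      define \<sigma>' where "\<sigma>' = \<sigma>(j0 := j1, j1 := j0)"
      have "\<forall>j\<in>J. \<sigma>' j \<in> J \<and> \<sigma>' (\<sigma>' j) = j \<and> b' (\<sigma>' j) = cnj (b' j) \<and> (\<sigma>' j = j \<longrightarrow> Im (b' j) = 0)
                 \<and> lat tau (a j) (b' j) \<and> \<bar>Im (b' j)\<bar> < Im tau"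
      proof
        fix j assume j: "j \<in> J"
        show "\<sigma>' j \<in> J \<and> \<sigma>' (\<sigma>' j) = j \<and> b' (\<sigma>' j) = cnj (b' j) \<and> (\<sigma>' j = j \<longrightarrow> Im (b' j) = 0)
                 \<and> lat tau (a j) (b' j) \<and> \<bar>Im (b' j)\<bar> < Im tau"
        proof (cases "j = j0 \<or> j = j1")
          case True
          then show ?thesis using j0 j1 r(1) rb by (auto simp: b'_def \<sigma>'_def)
        next
          case False
          then have jJ': "j \<in> J'" using j by (simp add: J'_def J1_def)
          then have "\<sigma> j \<in> J'" using IH by blast
          then have "\<sigma> j \<noteq> j0" "\<sigma> j \<noteq> j1" by (auto simp: J'_def J1_def)
          then show ?thesis using IH jJ' False by (auto simp: b'_def \<sigma>'_def J'_def J1_def)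
        qed
      qed
      then show ?thesis by blast
    qed
  qed
qed



lemma prod_jtheta_holo:
  assumes "Im tau > 0"
  shows "(\<lambda>z. \<Prod>j\<in>J. jtheta tau (z - a j)) holomorphic_on UNIV"
  by (intro holomorphic_on_prod jtheta_shift_analytic[OF assms])

lemma exists_real_nonzero:
  assumes tre: "Re tau = 0" and tim: "Im tau > 0" and fin: "finite J"
  shows "\<exists>x::real. (\<Prod>j\<in>J. jtheta tau (of_real x - a j)) \<noteq> 0"
proof -
  define Z where "Z = (\<lambda>j. {z\<in>closed_segment 0 1. jtheta tau (z - a j) = 0})"
  have finZ: "finite (Z j)" for j
  proof -
    have nc: "\<not> (\<lambda>z. jtheta tau (z - a j)) constant_on UNIV"
      using jtheta_0_ne[OF tre tim] jtheta_w0[of tau] unfolding constant_on_def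
      by (metis UNIV_I add_diff_cancel_right' diff_self)
    show ?thesis unfolding Z_def
      by (rule holomorphic_compact_finite_zeros[OF jtheta_shift_analytic[OF tim]]) (use nc in auto)
  qed
  define B where "B = (\<Union>j\<in>J. Z j)"
  have finB: "finite B" using fin finZ by (simp add: B_def)
  obtain x where x: "0 < x" "x < 1" "x \<notin> Re ` B"
    using finite_avoid[of 0 1 "Re ` B"] finB by auto
  have seg: "(of_real x :: complex) \<in> closed_segment 0 1"
    using x by (auto simp: closed_segment_def scaleR_conv_of_real intro!: exI[of _ x])
  have "jtheta tau (of_real x - a j) \<noteq> 0" if "j \<in> J" for j
  proof
    assume "jtheta tau (of_real x - a j) = 0"
    then have "of_real x \<in> B" using seg that by (auto simp: B_def Z_def)
    then have "x \<in> Re ` B" by (metis Re_complex_of_real image_eqI)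
    then show False using x(3) by blast
  qed
  then show ?thesis using fin by auto
qed

lemma real_limpt: "(0::complex) islimpt range complex_of_real"
  unfolding islimpt_approachable
proof (intro allI impI)
  fix e :: real assume e: "e > 0"
  show "\<exists>x'\<in>range complex_of_real. x' \<noteq> 0 \<and> dist x' 0 < e"
    by (rule bexI[OF _ rangeI[of complex_of_real "e/2"]]) (use e in auto)
qed

lemma zero_shift_iff:
  assumes tre: "Re tau = 0" and tim: "Im tau > 0"
  shows "jtheta tau (w + w0 tau - c) = 0 \<longleftrightarrow> lat tau c w"
proof -
  have "jtheta tau (w + w0 tau - c) = 0 \<longleftrightarrow> (\<exists>m n::int. w + w0 tau - c = w0 tau + of_int m + of_int n * tau)"
    by (rule jtheta_zero_iff[OF tre tim])
  also have "\<dots> \<longleftrightarrow> lat tau w c" unfolding lat_def by (auto simp: algebra_simps)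
  also have "\<dots> \<longleftrightarrow> lat tau c w" using lat_sym by blast
  finally show ?thesis .
qed

lemma count_zorder:
  assumes tre: "Re tau = 0" and tim: "Im tau > 0" and fin: "finite J"
  shows "zorder (\<lambda>z. \<Prod>j\<in>J. jtheta tau (z - a j)) (w + w0 tau) = int (card {j\<in>J. lat tau (a j) w})"
  using zorder_prod_jtheta[OF tre tim fin, of a "w + w0 tau"] by (simp add: zero_shift_iff[OF tre tim])

theorem lemma3p6:
  fixes tau :: complex and n :: nat and a :: "nat \<Rightarrow> complex"
  assumes "Re tau = 0" and "Im tau > 0"
    and "(\<forall>x::real. (\<Prod>j=1..n. jtheta tau (of_real x - a j)) \<in> \<real>
                      \<and> Re (\<Prod>j=1..n. jtheta tau (of_real x - a j)) \<ge> 0)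
       \<or> (\<forall>x::real. (\<Prod>j=1..n. jtheta tau (of_real x - a j)) \<in> \<real>
                      \<and> Re (\<Prod>j=1..n. jtheta tau (of_real x - a j)) \<le> 0)"
  shows "\<exists>(lam::real) (b::nat \<Rightarrow> complex) P.
           lam \<noteq> 0
         \<and> (\<forall>j\<in>{1..n}. \<bar>Im (b j)\<bar> < Im tau)
         \<and> partition_on {1..n} P
         \<and> (\<forall>S\<in>P. (\<exists>j. S = {j} \<and> b j \<in> \<real>)
                  \<or> (\<exists>j k. j \<noteq> k \<and> S = {j, k} \<and> b j = cnj (b k)))
         \<and> (\<forall>z::complex. (\<Prod>j=1..n. jtheta tau (z - a j))
                         = of_real lam * (\<Prod>j=1..n. jtheta tau (z - b j)))"
proof -
  have tre: "Re tau = 0" and tim: "Im tau > 0" using assms by auto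
  define J where "J = {1..n}"
  have fin: "finite J" by (simp add: J_def)
  define f where "f = (\<lambda>z. \<Prod>j\<in>J. jtheta tau (z - a j))"
  define F2 where "F2 = (\<lambda>z. \<Prod>j\<in>J. jtheta tau (z - cnj (a j)))"
  have sgn: "(\<forall>x::real. f (of_real x) \<in> \<real> \<and> Re (f (of_real x)) \<ge> 0) \<or> (\<forall>x::real. f (of_real x) \<in> \<real> \<and> Re (f (of_real x)) \<le> 0)"
    using assms(3) by (simp add: f_def J_def)
  have freal: "f (of_real x) \<in> \<real>" for x using sgn by auto
  have fholo: "f holomorphic_on UNIV" unfolding f_def by (rule prod_jtheta_holo[OF tim])
  have F2holo: "F2 holomorphic_on UNIV" unfolding F2_def by (rule prod_jtheta_holo[OF tim])
  obtain x1 where x1: "f (of_real x1) \<noteq> 0" using exists_real_nonzero[OF tre tim fin] by (auto simp: f_def)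
  have onR: "f (of_real x) = F2 (of_real x)" for x
  proof -
    have "f (of_real x) = cnj (f (of_real x))" using freal[of x] Reals_cnj_iff by metis
    also have "cnj (f (of_real x)) = F2 (of_real x)" unfolding f_def F2_def by (simp add: jtheta_cnj[OF tre])
    finally show ?thesis .
  qed
  have fF: "f z = F2 z" for z
  proof -
    have "(\<lambda>z. f z - F2 z) z = 0"
      by (rule analytic_continuation[of "\<lambda>z. f z - F2 z" UNIV "range complex_of_real" 0])
         (auto intro!: holomorphic_intros fholo F2holo real_limpt simp: onR)
    then show ?thesis by simp
  qed
  have cnt: "\<forall>w. card {j\<in>J. lat tau (a j) w} = card {j\<in>J. lat tau (cnj (a j)) w}"
  proof
    fix w
    have "int (card {j\<in>J. lat tau (a j) w}) = zorder f (w + w0 tau)"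
      unfolding f_def using count_zorder[OF tre tim fin] by simp
    also have "f = F2" using fF by auto
    also have "zorder F2 (w + w0 tau) = int (card {j\<in>J. lat tau (cnj (a j)) w})"
      unfolding F2_def using count_zorder[OF tre tim fin, of "\<lambda>j. cnj (a j)"] by simp
    finally show "card {j\<in>J. lat tau (a j) w} = card {j\<in>J. lat tau (cnj (a j)) w}" by simp
  qed
  have ev: "\<forall>w. Im w = - Im tau / 2 \<longrightarrow> even (card {j\<in>J. lat tau (a j) w})"
  proof (intro allI impI)
    fix w assume w: "Im w = - Im tau / 2"
    define x0 where "x0 = Re w + 1/2"
    have x0w: "of_real x0 = w + w0 tau" using w tre by (simp add: complex_eq_iff x0_def w0_def)
    have s2: "(\<forall>x::real. Re (f (of_real x)) \<ge> 0) \<or> (\<forall>x::real. Re (f (of_real x)) \<le> 0)" using sgn by blast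
    have "even (nat (zorder f (of_real x0)))"
      by (rule even_zorder_real[OF fholo freal s2]) (use x1 in blast)
    then show "even (card {j\<in>J. lat tau (a j) w})"
      using count_zorder[OF tre tim fin, of a w] by (simp add: f_def x0w)
  qed
  obtain b \<sigma> where bs: "\<forall>j\<in>J. \<sigma> j \<in> J \<and> \<sigma> (\<sigma> j) = j \<and> b (\<sigma> j) = cnj (b j) \<and> (\<sigma> j = j \<longrightarrow> Im (b j) = 0)
                 \<and> lat tau (a j) (b j) \<and> \<bar>Im (b j)\<bar> < Im tau"
    using comb[OF tre tim fin cnt ev] by blast
  have bij: "bij_betw \<sigma> J J" by (rule bij_betw_byWitness[where f'=\<sigma>]) (use bs in auto)
  have sumIm: "(\<Sum>j\<in>J. Im (a j)) = 0"
  proof -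
    define z where "z = (of_real x1 :: complex)"
    define E where "E = (\<lambda>u. exp (- of_real pi * \<i> * tau - 2 * of_real pi * \<i> * u))"
    have sh: "(\<Prod>j\<in>J. jtheta tau (z + tau - c j)) = (\<Prod>j\<in>J. E (z - c j)) * (\<Prod>j\<in>J. jtheta tau (z - c j))" for c
    proof -
      have "jtheta tau (z + tau - c j) = E (z - c j) * jtheta tau (z - c j)" for j
        using jtheta_plus_tau[of tau "z - c j"] by (simp add: E_def algebra_simps)
      then show ?thesis by (simp add: prod.distrib)
    qed
    have "f (z + tau) = F2 (z + tau)" by (rule fF)
    then have "(\<Prod>j\<in>J. E (z - a j)) * f z = (\<Prod>j\<in>J. E (z - cnj (a j))) * F2 z"
      using sh[of a] sh[of "\<lambda>j. cnj (a j)"] by (simp add: f_def F2_def)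
    then have "(\<Prod>j\<in>J. E (z - a j)) = (\<Prod>j\<in>J. E (z - cnj (a j)))" using x1 fF[of z] by (simp add: z_def)
    then have "exp (\<Sum>j\<in>J. - of_real pi * \<i> * tau - 2 * of_real pi * \<i> * (z - a j))
             = exp (\<Sum>j\<in>J. - of_real pi * \<i> * tau - 2 * of_real pi * \<i> * (z - cnj (a j)))"
      by (simp add: E_def exp_sum[OF fin])
    then have "exp ((\<Sum>j\<in>J. - of_real pi * \<i> * tau - 2 * of_real pi * \<i> * (z - a j))
             - (\<Sum>j\<in>J. - of_real pi * \<i> * tau - 2 * of_real pi * \<i> * (z - cnj (a j)))) = 1"
      by (simp add: exp_diff)
    moreover have "(\<Sum>j\<in>J. - of_real pi * \<i> * tau - 2 * of_real pi * \<i> * (z - a j))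
             - (\<Sum>j\<in>J. - of_real pi * \<i> * tau - 2 * of_real pi * \<i> * (z - cnj (a j)))
             = of_real (- 4 * pi * (\<Sum>j\<in>J. Im (a j)))"
    proof -
      have t: "(- of_real pi * \<i> * tau - 2 * of_real pi * \<i> * (z - c)) - (- of_real pi * \<i> * tau - 2 * of_real pi * \<i> * (z - cnj c))
            = of_real (- 4 * pi * Im c)" for c
        by (simp add: complex_eq_iff algebra_simps)
      have "(\<Sum>j\<in>J. - of_real pi * \<i> * tau - 2 * of_real pi * \<i> * (z - a j))
             - (\<Sum>j\<in>J. - of_real pi * \<i> * tau - 2 * of_real pi * \<i> * (z - cnj (a j)))
            = (\<Sum>j\<in>J. of_real (- 4 * pi * Im (a j)))"
        by (simp only: sum_subtractf[symmetric] t)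
      also have "\<dots> = of_real (- 4 * pi * (\<Sum>j\<in>J. Im (a j)))" by (simp add: sum_distrib_left)
      finally show ?thesis .
    qed
    ultimately have "exp (complex_of_real (- 4 * pi * (\<Sum>j\<in>J. Im (a j)))) = 1" by simp
    then have "Re (complex_of_real (- 4 * pi * (\<Sum>j\<in>J. Im (a j)))) = 0" by (simp only: exp_eq_1)
    then show ?thesis by simp
  qed
  have "\<forall>j\<in>J. \<exists>p::int \<times> int. a j - b j = of_int (fst p) + of_int (snd p) * tau"
    using bs by (auto simp: lat_def)
  then obtain g where g: "\<forall>j\<in>J. a j - b j = of_int (fst (g j)) + of_int (snd (g j)) * tau"
    by (metis bchoice)
  define M where "M = (\<lambda>j. fst (g j))"
  define N where "N = (\<lambda>j. snd (g j))"
  have MN: "a j - b j = of_int (M j) + of_int (N j) * tau" if "j \<in> J" for j using g that by (simp add: M_def N_def)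
  have sImb: "(\<Sum>j\<in>J. Im (b j)) = 0"
  proof -
    have "(\<Sum>j\<in>J. Im (b (\<sigma> j))) = (\<Sum>j\<in>J. Im (b j))" by (rule sum.reindex_bij_betw[OF bij])
    moreover have "(\<Sum>j\<in>J. Im (b (\<sigma> j))) = (\<Sum>j\<in>J. - Im (b j))" using bs by (intro sum.cong) auto
    ultimately show ?thesis by (simp add: sum_negf)
  qed
  have ImN: "Im (b j) = Im (a j) - of_int (N j) * Im tau" if "j \<in> J" for j
  proof -
    have "Im (a j - b j) = of_int (N j) * Im tau" using MN[OF that] by simp
    then show ?thesis by simp
  qed
  have "(\<Sum>j\<in>J. Im (a j) - of_int (N j) * Im tau) = 0" using sImb ImN by (metis (no_types, lifting) sum.cong)
  then have "(\<Sum>j\<in>J. Im (a j)) - (\<Sum>j\<in>J. of_int (N j)) * Im tau = 0" by (simp add: sum_subtractf sum_distrib_right)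
  then have "(\<Sum>j\<in>J. of_int (N j)) * Im tau = (0::real)" using sumIm by simp
  then have "(\<Sum>j\<in>J. of_int (N j)) = (0::real)" using tim by simp
  then have "of_int (\<Sum>j\<in>J. N j) = (0::real)" by simp
  then have sumN0: "(\<Sum>j\<in>J. N j) = 0" by (simp only: of_int_eq_0_iff)
  have sumN: "(\<Sum>j\<in>J. of_int (N j) :: complex) = 0"
    by (metis of_int_0 of_int_sum sumN0)
  define K where "K = exp (\<Sum>j\<in>J. - of_real pi * \<i> * tau * of_int (N j) ^ 2 + 2 * of_real pi * \<i> * of_int (N j) * a j)"
  have gK: "(\<Prod>j\<in>J. jtheta tau (z - b j)) = K * f z" for z
  proof -
    have "jtheta tau (z - b j) = latf tau (N j) (z - a j) * jtheta tau (z - a j)" if "j \<in> J" for j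
    proof -
      have e: "z - b j = (z - a j) + of_int (M j) + of_int (N j) * tau" using MN[OF that] by (simp add: algebra_simps)
      show ?thesis unfolding e by (rule jtheta_lattice)
    qed
    then have "(\<Prod>j\<in>J. jtheta tau (z - b j)) = (\<Prod>j\<in>J. latf tau (N j) (z - a j) * jtheta tau (z - a j))"
      by (rule prod.cong[OF refl])
    also have "\<dots> = (\<Prod>j\<in>J. latf tau (N j) (z - a j)) * f z" by (simp add: f_def prod.distrib)
    also have "(\<Prod>j\<in>J. latf tau (N j) (z - a j)) = K"
    proof -
      have "(\<Prod>j\<in>J. latf tau (N j) (z - a j)) = exp (\<Sum>j\<in>J. - of_real pi * \<i> * tau * of_int (N j) ^ 2 - 2 * of_real pi * \<i> * of_int (N j) * (z - a j))"
        by (simp add: latf_def exp_sum[OF fin])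
      also have "(\<Sum>j\<in>J. - of_real pi * \<i> * tau * of_int (N j) ^ 2 - 2 * of_real pi * \<i> * of_int (N j) * (z - a j))
          = (\<Sum>j\<in>J. - of_real pi * \<i> * tau * of_int (N j) ^ 2 + 2 * of_real pi * \<i> * of_int (N j) * a j) - 2 * of_real pi * \<i> * z * (\<Sum>j\<in>J. of_int (N j))"
        by (simp add: sum_subtractf sum.distrib sum_distrib_left algebra_simps)
      also have "\<dots> = (\<Sum>j\<in>J. - of_real pi * \<i> * tau * of_int (N j) ^ 2 + 2 * of_real pi * \<i> * of_int (N j) * a j)"
        using sumN by simp
      finally show ?thesis by (simp add: K_def)
    qed
    finally show ?thesis .
  qed
  have Knz: "K \<noteq> 0" by (simp add: K_def)
  have greal: "(\<Prod>j\<in>J. jtheta tau (of_real x - b j)) \<in> \<real>" for x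
  proof -
    have "cnj (\<Prod>j\<in>J. jtheta tau (of_real x - b j)) = (\<Prod>j\<in>J. jtheta tau (of_real x - cnj (b j)))"
      by (simp add: jtheta_cnj[OF tre])
    also have "\<dots> = (\<Prod>j\<in>J. jtheta tau (of_real x - b (\<sigma> j)))" using bs by (intro prod.cong) auto
    also have "\<dots> = (\<Prod>j\<in>J. jtheta tau (of_real x - b j))" by (rule prod.reindex_bij_betw[OF bij])
    finally show ?thesis using Reals_cnj_iff by blast
  qed
  have "K = (\<Prod>j\<in>J. jtheta tau (of_real x1 - b j)) / f (of_real x1)" using gK[of "of_real x1"] x1 by simp
  then have KR: "K \<in> \<real>" using greal[of x1] freal[of x1] by (simp add: Reals_divide)
  define lam where "lam = Re (1 / K)"
  have "1 / K \<in> \<real>" using KR by (simp add: Reals_divide)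
  then have lamK: "of_real lam = 1 / K" unfolding lam_def by (simp add: complex_is_Real_iff complex_eq_iff)
  have lam0: "lam \<noteq> 0" using lamK Knz by (metis divide_eq_0_iff of_real_0 one_neq_zero)
  have feq: "f z = of_real lam * (\<Prod>j\<in>J. jtheta tau (z - b j))" for z
    using gK[of z] Knz lamK by simp
  define P where "P = (\<lambda>j. {j, \<sigma> j}) ` J"
  have part: "partition_on J P"
  proof (rule partition_onI)
    show "\<Union>P = J" using bs by (auto simp: P_def)
    show "{} \<notin> P" by (auto simp: P_def)
    fix p q assume pq: "p \<in> P" "q \<in> P" "p \<noteq> q"
    then obtain j k where jk: "j \<in> J" "k \<in> J" "p = {j, \<sigma> j}" "q = {k, \<sigma> k}" by (auto simp: P_def)
    show "disjnt p q"
    proof (rule ccontr)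
      assume "\<not> disjnt p q"
      then obtain x where x: "x \<in> p" "x \<in> q" by (auto simp: disjnt_def)
      have "p = {x, \<sigma> x}" using x(1) jk bs by auto
      moreover have "q = {x, \<sigma> x}" using x(2) jk bs by auto
      ultimately show False using pq(3) by simp
    qed
  qed
  have blocks: "\<forall>S\<in>P. (\<exists>j. S = {j} \<and> b j \<in> \<real>) \<or> (\<exists>j k. j \<noteq> k \<and> S = {j, k} \<and> b j = cnj (b k))"
  proof
    fix S assume "S \<in> P"
    then obtain j where j: "j \<in> J" "S = {j, \<sigma> j}" by (auto simp: P_def)
    show "(\<exists>j. S = {j} \<and> b j \<in> \<real>) \<or> (\<exists>j k. j \<noteq> k \<and> S = {j, k} \<and> b j = cnj (b k))"
    proof (cases "\<sigma> j = j")
      case True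
      then have "b j \<in> \<real>" using bs j(1) by (auto simp: complex_is_Real_iff)
      then show ?thesis using True j by auto
    next
      case False
      have bb: "b j = cnj (b (\<sigma> j))" using bs j(1) by simp
      have ne: "j \<noteq> \<sigma> j" using False by simp
      have "\<exists>j k. j \<noteq> k \<and> S = {j, k} \<and> b j = cnj (b k)"
        by (rule exI[of _ j], rule exI[of _ "\<sigma> j"]) (use ne j(2) bb in simp)
      then show ?thesis by (rule disjI2)
    qed
  qed
  have bnd: "\<forall>j\<in>{1..n}. \<bar>Im (b j)\<bar> < Im tau" using bs by (simp add: J_def)
  have feq': "\<forall>z::complex. (\<Prod>j=1..n. jtheta tau (z - a j)) = of_real lam * (\<Prod>j=1..n. jtheta tau (z - b j))"
    using feq by (simp add: f_def J_def)
  have part': "partition_on {1..n} P" using part by (simp add: J_def)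
  show ?thesis using lam0 bnd part' blocks feq' by blast
qed


end
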